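(* Let $\mathcal A$ be a mixed online algorithm for an online problem $(\mathcal X,\mathcal R,d)$. Then there exist (1) a randomized algorithm $\mathcal A_1$ given as a probability distribution over deterministic online algorithms, (2) a behavioral online algorithm $\mathcal A_2$, and (3) a distributional online algorithm $\mathcal A_3$, all for the same problem, such that for every finite request sequence $\varrho$ the expected cost of $\mathcal A_1$ and of $\mathcal A_2$ on $\varrho$, and the cost of $\mathcal A_3$ on $\varrho$, are each at most $E(\mathrm{cost}_{\mathcal A}(\varrho))$.
   Context: Online problem: a set $\mathcal X$ of states (configurations), a set $\mathcal R$ of requests, a start state $s^0\in\mathcal X$, a function $d:\mathcal X\times\mathcal X\to[0,\infty)$ with $d(x,x)=0$ and $d(x,z)\le d(x,y)+d(y,z)$, and a cost function $\mathrm{cost}:\mathcal X\times\mathcal R\times\mathcal X\to[0,\infty)$ ($\mathrm{cost}(x,r,y)$ is the cost of serving request $r$ while moving from $x$ to $y$) satisfying $\mathrm{cost}(u,r,v)\le d(u,x)+\mathrm{cost}(x,r,y)+d(y,v)$ for all $u,x,y,v\in\mathcal X$, $r\in\mathcal R$. $\Pi$ denotes the set of finitely supported probability distributions on $\mathcal X$; a point mass at $x$ is identified with $x$. For $\pi,\pi'\in\Pi$ and $r\in\mathcal R$, $\mathrm{cost}(\pi,r,\pi')$ is the minimum transportation cost: the minimum of $\sum_{x,y}\gamma(x,y)\,\mathrm{cost}(x,r,y)$ over all probability distributions $\gamma$ on $\mathrm{supp}(\pi)\times\mathrm{supp}(\pi')$ whose first marginal is $\pi$ and second marginal is $\pi'$.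 Mixed online algorithm $\mathcal A$: a set $\mathcal M$ of memory states, a start memory state $m^0$, and for each full state $k=(\pi,m)\in\Pi\times\mathcal M$ (reachable by $\mathcal A$) and each request $r$, a finite list of "subsequent" full states $k_i=(\pi_i,m_i)$, $i=1,\dots,p$, with weights $\lambda_i>0$, $\sum_i\lambda_i=1$. Starting from $k^0=(s^0,m^0)$, on request $r^t$ the algorithm moves from $k^{t-1}$ to $k^t=k_i$ (the subsequents for $(k^{t-1},r^t)$) with probability $\lambda_i$. The cost of such a step is $\mathrm{cost}_{\mathcal A}(k,r)=\mathrm{cost}(\pi,r,\bar\pi)$ where $\bar\pi=\sum_i\lambda_i\pi_i$, and $\mathrm{cost}_{\mathcal A}(\varrho)=\sum_{t=1}^n\mathrm{cost}_{\mathcal A}(k^{t-1},r^t)$ (a random variable). Deterministic online algorithm: assigns to each finite request sequence $r^1\dots r^t$ a state $x^t$ depending only on $r^1,\dots,r^t$ (with $x^0=s^0$); its cost on $r^1\dots r^n$ is $\sum_t\mathrm{cost}(x^{t-1},r^t,x^t)$. A distribution over deterministic online algorithms is a random variable whose values are deterministic online algorithms; its cost is the expected cost. Behavioral online algorithm: a set $\mathcal M$ of memory states, a start memory $m^0$, and for each $(x,m)\in\mathcal X\times\mathcal M$ and $r\in\mathcal R$ a finitely supported probability distribution on $\mathcal X\times\mathcal M$; starting from $(s^0,m^0)$, on request $r^t$ it draws $(x^t,m^t)$ from the distribution associated with $(x^{t-1},m^{t-1},r^t)$; its cost is the random variable $\sum_t\mathrm{cost}(x^{t-1},r^t,x^t)$.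 Distributional online algorithm: a set $\mathcal M$ of memory states, a start memory $m^0$, and a deterministic map $(\pi,m,r)\mapsto(\pi',m')$ from $\Pi\times\mathcal M\times\mathcal R$ to $\Pi\times\mathcal M$; starting from $(s^0,m^0)$ it computes $(\pi^t,m^t)$ from $(\pi^{t-1},m^{t-1},r^t)$, and its cost is $\sum_t\mathrm{cost}(\pi^{t-1},r^t,\pi^t)$. *)

theory Defs
  imports "HOL-Probability.Probability"
begin

text \<open>States have type 'x, requests type 'r. The online problem consists of d and cost
  (the start state s0 is a separate parameter).\<close>

definition online_problem :: "('x \<Rightarrow> 'x \<Rightarrow> real) \<Rightarrow> ('x \<Rightarrow> 'r \<Rightarrow> 'x \<Rightarrow> real) \<Rightarrow> bool" where
  "online_problem d cost \<longleftrightarrow>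
     (\<forall>x y. d x y \<ge> 0) \<and> (\<forall>x. d x x = 0) \<and>
     (\<forall>x y z. d x z \<le> d x y + d y z) \<and>
     (\<forall>x r y. cost x r y \<ge> 0) \<and>
     (\<forall>u x y v r. cost u r v \<le> d u x + cost x r y + d y v)"

text \<open>Pi = finitely supported distributions: we use 'x pmf with finite support.
  Transportation cost between two distributions (minimum over couplings).\<close>

definition tcost :: "('x \<Rightarrow> 'r \<Rightarrow> 'x \<Rightarrow> real) \<Rightarrow> 'x pmf \<Rightarrow> 'r \<Rightarrow> 'x pmf \<Rightarrow> real" where
  "tcost cost \<pi> r \<pi>' = Inf {(\<Sum>(x,y)\<in>set_pmf \<pi> \<times> set_pmf \<pi>'. pmf \<gamma> (x,y) * cost x r y) | \<gamma>.
       map_pmf fst \<gamma> = \<pi> \<and> map_pmf snd \<gamma> = \<pi>'}"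

fun chain :: "('s \<Rightarrow> 'r \<Rightarrow> 's pmf) \<Rightarrow> 's \<Rightarrow> 'r list \<Rightarrow> 's list pmf" where
  "chain T s [] = return_pmf []"
| "chain T s (r # rs) = bind_pmf (T s r) (\<lambda>s'. map_pmf (Cons s') (chain T s' rs))"

fun path_cost :: "('s \<Rightarrow> 'r \<Rightarrow> 's \<Rightarrow> real) \<Rightarrow> 's \<Rightarrow> 'r list \<Rightarrow> 's list \<Rightarrow> real" where
  "path_cost c s (r # rs) (s' # ss) = c s r s' + path_cost c s' rs ss"
| "path_cost c s _ _ = 0"

text \<open>A full state is a pair (pi, m) :: 'x pmf \<times> 'm. For each full state and request the
  algorithm gives a finitely supported distribution over subsequent full states (the
  subsequents k_i with weights lambda_i).\<close>

inductive_set reachable :: "('k \<Rightarrow> 'r \<Rightarrow> 'k pmf) \<Rightarrow> 'k \<Rightarrow> 'k set"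
  for step :: "'k \<Rightarrow> 'r \<Rightarrow> 'k pmf" and k0 :: 'k where
  start_rule: "k0 \<in> reachable step k0"
| step_rule: "k \<in> reachable step k0 \<Longrightarrow> k' \<in> set_pmf (step k r) \<Longrightarrow> k' \<in> reachable step k0"

definition mixed_alg :: "'x \<Rightarrow> 'm \<Rightarrow> ('x pmf \<times> 'm \<Rightarrow> 'r \<Rightarrow> ('x pmf \<times> 'm) pmf) \<Rightarrow> bool" where
  "mixed_alg s0 m0 step \<longleftrightarrow>
     (\<forall>k \<in> reachable step (return_pmf s0, m0). \<forall>r.
        finite (set_pmf (step k r)) \<and> (\<forall>k' \<in> set_pmf (step k r). finite (set_pmf (fst k'))))"

text \<open>cost_A(k, r) = cost(pi, r, pibar) with pibar = sum_i lambda_i pi_i.\<close>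
definition mixed_step_cost ::
  "('x \<Rightarrow> 'r \<Rightarrow> 'x \<Rightarrow> real) \<Rightarrow> ('x pmf \<times> 'm \<Rightarrow> 'r \<Rightarrow> ('x pmf \<times> 'm) pmf) \<Rightarrow> 'x pmf \<times> 'm \<Rightarrow> 'r \<Rightarrow> real" where
  "mixed_step_cost cost step k r = tcost cost (fst k) r (bind_pmf (step k r) fst)"

definition mixed_exp_cost ::
  "('x \<Rightarrow> 'r \<Rightarrow> 'x \<Rightarrow> real) \<Rightarrow> 'x \<Rightarrow> 'm \<Rightarrow> ('x pmf \<times> 'm \<Rightarrow> 'r \<Rightarrow> ('x pmf \<times> 'm) pmf) \<Rightarrow> 'r list \<Rightarrow> real" where
  "mixed_exp_cost cost s0 m0 step \<rho> =
     measure_pmf.expectation (chain step (return_pmf s0, m0) \<rho>)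
       (path_cost (\<lambda>k r k'. mixed_step_cost cost step k r) (return_pmf s0, m0) \<rho>)"

definition det_alg :: "'x \<Rightarrow> ('r list \<Rightarrow> 'x) \<Rightarrow> bool" where
  "det_alg s0 A \<longleftrightarrow> A [] = s0"

definition det_cost :: "('x \<Rightarrow> 'r \<Rightarrow> 'x \<Rightarrow> real) \<Rightarrow> ('r list \<Rightarrow> 'x) \<Rightarrow> 'r list \<Rightarrow> real" where
  "det_cost cost A \<rho> = (\<Sum>t<length \<rho>. cost (A (take t \<rho>)) (\<rho> ! t) (A (take (Suc t) \<rho>)))"

definition behavioral_alg :: "('x \<times> 'mm \<Rightarrow> 'r \<Rightarrow> ('x \<times> 'mm) pmf) \<Rightarrow> bool" where
  "behavioral_alg T \<longleftrightarrow> (\<forall>s r. finite (set_pmf (T s r)))"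

definition beh_exp_cost ::
  "('x \<Rightarrow> 'r \<Rightarrow> 'x \<Rightarrow> real) \<Rightarrow> 'x \<Rightarrow> 'mm \<Rightarrow> ('x \<times> 'mm \<Rightarrow> 'r \<Rightarrow> ('x \<times> 'mm) pmf) \<Rightarrow> 'r list \<Rightarrow> real" where
  "beh_exp_cost cost s0 m0 T \<rho> =
     measure_pmf.expectation (chain T (s0, m0) \<rho>)
       (path_cost (\<lambda>s r s'. cost (fst s) r (fst s')) (s0, m0) \<rho>)"

definition distributional_alg :: "('x pmf \<times> 'mm \<Rightarrow> 'r \<Rightarrow> 'x pmf \<times> 'mm) \<Rightarrow> bool" where
  "distributional_alg F \<longleftrightarrow>
     (\<forall>\<pi> m r. finite (set_pmf \<pi>) \<longrightarrow> finite (set_pmf (fst (F (\<pi>, m) r))))"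

fun drun :: "('k \<Rightarrow> 'r \<Rightarrow> 'k) \<Rightarrow> 'k \<Rightarrow> 'r list \<Rightarrow> 'k list" where
  "drun F k [] = []"
| "drun F k (r # rs) = F k r # drun F (F k r) rs"

definition dist_cost ::
  "('x \<Rightarrow> 'r \<Rightarrow> 'x \<Rightarrow> real) \<Rightarrow> 'x \<Rightarrow> 'mm \<Rightarrow> ('x pmf \<times> 'mm \<Rightarrow> 'r \<Rightarrow> 'x pmf \<times> 'mm) \<Rightarrow> 'r list \<Rightarrow> real" where
  "dist_cost cost s0 m0 F \<rho> =
     path_cost (\<lambda>k r k'. tcost cost (fst k) r (fst k')) (return_pmf s0, m0) \<rho>
       (drun F (return_pmf s0, m0) \<rho>)"

end

theory Submission
  imports Defs
begin


lemma exp_bind: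
  fixes h :: "'b \<Rightarrow> real"
  assumes "finite (set_pmf p)" "\<And>x. x \<in> set_pmf p \<Longrightarrow> finite (set_pmf (f x))"
  shows "measure_pmf.expectation (bind_pmf p f) h =
         measure_pmf.expectation p (\<lambda>x. measure_pmf.expectation (f x) h)"
  using pmf_expectation_bind[of "set_pmf p" f p h] assms
    integral_measure_pmf[OF assms(1), of p "\<lambda>x. measure_pmf.expectation (f x) h"]
  by simp

lemma exp_cong:
  fixes f g :: "'a \<Rightarrow> real"
  shows "(\<And>x. x \<in> set_pmf p \<Longrightarrow> f x = g x) \<Longrightarrow> measure_pmf.expectation p f = measure_pmf.expectation p g"
  by (intro integral_cong_AE) (auto simp: AE_measure_pmf_iff)

lemma exp_add_const:
  fixes f :: "'a \<Rightarrow> real"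
  assumes "finite (set_pmf p)"
  shows "measure_pmf.expectation p (\<lambda>x. a + f x) = a + measure_pmf.expectation p f"
  using assms by (simp add: integrable_measure_pmf_finite)

lemma chain_finite:
  assumes "s \<in> S" "\<And>s r. s \<in> S \<Longrightarrow> finite (set_pmf (T s r))"
    "\<And>s r s'. s \<in> S \<Longrightarrow> s' \<in> set_pmf (T s r) \<Longrightarrow> s' \<in> S"
  shows "finite (set_pmf (chain T s \<rho>))"
  using assms(1) by (induction \<rho> arbitrary: s) (auto simp: assms)

lemma chain_exp_Cons:
  fixes c :: "'s \<Rightarrow> 'r \<Rightarrow> 's \<Rightarrow> real"
  assumes "finite (set_pmf (T s r))" "\<And>s'. s' \<in> set_pmf (T s r) \<Longrightarrow> finite (set_pmf (chain T s' rs))"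
  shows "measure_pmf.expectation (chain T s (r#rs)) (path_cost c s (r#rs)) =
     measure_pmf.expectation (T s r) (\<lambda>s'. c s r s' + measure_pmf.expectation (chain T s' rs) (path_cost c s' rs))"
proof -
  have "measure_pmf.expectation (chain T s (r#rs)) (path_cost c s (r#rs)) =
     measure_pmf.expectation (T s r) (\<lambda>s'. measure_pmf.expectation (map_pmf (Cons s') (chain T s' rs)) (path_cost c s (r#rs)))"
    by (simp add: exp_bind assms)
  also have "\<dots> = measure_pmf.expectation (T s r) (\<lambda>s'. c s r s' + measure_pmf.expectation (chain T s' rs) (path_cost c s' rs))"
    by (intro exp_cong) (simp add: exp_add_const assms)
  finally show ?thesis .
qed



definition coupling :: "('x \<times> 'y) pmf \<Rightarrow> 'x pmf \<Rightarrow> 'y pmf \<Rightarrow> bool" where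
  "coupling \<gamma> \<pi> \<pi>' \<longleftrightarrow> map_pmf fst \<gamma> = \<pi> \<and> map_pmf snd \<gamma> = \<pi>'"

definition ccost :: "('x \<Rightarrow> 'r \<Rightarrow> 'x \<Rightarrow> real) \<Rightarrow> 'x pmf \<Rightarrow> 'r \<Rightarrow> 'x pmf \<Rightarrow> ('x \<times> 'x) pmf \<Rightarrow> real" where
  "ccost cost \<pi> r \<pi>' \<gamma> = (\<Sum>(x,y)\<in>set_pmf \<pi> \<times> set_pmf \<pi>'. pmf \<gamma> (x,y) * cost x r y)"

lemma tcost_alt: "tcost cost \<pi> r \<pi>' = Inf {ccost cost \<pi> r \<pi>' \<gamma> | \<gamma>. coupling \<gamma> \<pi> \<pi>'}"
  unfolding tcost_def ccost_def coupling_def by simp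

lemma coupling_support:
  assumes "coupling \<gamma> \<pi> \<pi>'"
  shows "set_pmf \<gamma> \<subseteq> set_pmf \<pi> \<times> set_pmf \<pi>'"
proof
  fix p assume "p \<in> set_pmf \<gamma>"
  then have "fst p \<in> set_pmf (map_pmf fst \<gamma>)" "snd p \<in> set_pmf (map_pmf snd \<gamma>)" by auto
  then show "p \<in> set_pmf \<pi> \<times> set_pmf \<pi>'" using assms unfolding coupling_def by (cases p) auto
qed

lemma ccost_integral:
  assumes "coupling \<gamma> \<pi> \<pi>'" "finite (set_pmf \<pi>)" "finite (set_pmf \<pi>')"
  shows "ccost cost \<pi> r \<pi>' \<gamma> = measure_pmf.expectation \<gamma> (\<lambda>(x,y). cost x r y)"
proof -
  have "measure_pmf.expectation \<gamma> (\<lambda>(x,y). cost x r y) =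
     (\<Sum>a\<in>set_pmf \<pi> \<times> set_pmf \<pi>'. (\<lambda>(x,y). cost x r y) a * pmf \<gamma> a)"
    using coupling_support[OF assms(1)] assms(2,3)
    by (intro integral_measure_pmf_real) auto
  then show ?thesis unfolding ccost_def
    by (simp add: case_prod_beta mult.commute)
qed

lemma pmf_map_fst_sum:
  assumes "set_pmf \<gamma> \<subseteq> A \<times> B" "finite B"
  shows "pmf (map_pmf fst \<gamma>) x = (\<Sum>y\<in>B. pmf \<gamma> (x,y))"
proof -
  have "pmf (map_pmf fst \<gamma>) x = measure_pmf.prob \<gamma> (fst -` {x})" by (simp add: pmf_map)
  also have "\<dots> = measure_pmf.prob \<gamma> (fst -` {x} \<inter> set_pmf \<gamma>)" by (simp add: measure_Int_set_pmf)
  also have "fst -` {x} \<inter> set_pmf \<gamma> = ({x} \<times> B) \<inter> set_pmf \<gamma>" using assms(1) by auto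
  also have "measure_pmf.prob \<gamma> \<dots> = measure_pmf.prob \<gamma> ({x} \<times> B)" by (simp add: measure_Int_set_pmf)
  also have "\<dots> = sum (pmf \<gamma>) ({x} \<times> B)" using assms(2) by (simp add: measure_measure_pmf_finite)
  also have "{x} \<times> B = (\<lambda>y. (x,y)) ` B" by auto
  also have "sum (pmf \<gamma>) \<dots> = (\<Sum>y\<in>B. pmf \<gamma> (x,y))"
    by (subst sum.reindex) (auto simp: inj_on_def)
  finally show ?thesis .
qed

lemma pmf_map_snd_sum:
  assumes "set_pmf \<gamma> \<subseteq> A \<times> B" "finite A"
  shows "pmf (map_pmf snd \<gamma>) y = (\<Sum>x\<in>A. pmf \<gamma> (x,y))"
proof -
  have "pmf (map_pmf snd \<gamma>) y = measure_pmf.prob \<gamma> (snd -` {y})" by (simp add: pmf_map)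
  also have "\<dots> = measure_pmf.prob \<gamma> (snd -` {y} \<inter> set_pmf \<gamma>)" by (simp add: measure_Int_set_pmf)
  also have "snd -` {y} \<inter> set_pmf \<gamma> = (A \<times> {y}) \<inter> set_pmf \<gamma>" using assms(1) by auto
  also have "measure_pmf.prob \<gamma> \<dots> = measure_pmf.prob \<gamma> (A \<times> {y})" by (simp add: measure_Int_set_pmf)
  also have "\<dots> = sum (pmf \<gamma>) (A \<times> {y})" using assms(2) by (simp add: measure_measure_pmf_finite)
  also have "A \<times> {y} = (\<lambda>x. (x,y)) ` A" by auto
  also have "sum (pmf \<gamma>) \<dots> = (\<Sum>x\<in>A. pmf \<gamma> (x,y))"
    by (subst sum.reindex) (auto simp: inj_on_def)
  finally show ?thesis .
qed

lemma ccost_nonneg: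
  assumes "\<forall>x r y. cost x r y \<ge> 0"
  shows "ccost cost \<pi> r \<pi>' \<gamma> \<ge> 0"
  unfolding ccost_def using assms by (intro sum_nonneg) auto

lemma coupling_pair: "coupling (pair_pmf \<pi> \<pi>') \<pi> \<pi>'"
  unfolding coupling_def by (simp add: map_fst_pair_pmf map_snd_pair_pmf)

lemma tcost_set_ne: "{ccost cost \<pi> r \<pi>' \<gamma> | \<gamma>. coupling \<gamma> \<pi> \<pi>'} \<noteq> {}"
  using map_fst_pair_pmf map_snd_pair_pmf unfolding coupling_def by blast

lemma tcost_le:
  assumes "\<forall>x r y. cost x r y \<ge> 0" "coupling \<gamma> \<pi> \<pi>'"
  shows "tcost cost \<pi> r \<pi>' \<le> ccost cost \<pi> r \<pi>' \<gamma>"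
  unfolding tcost_alt
  by (rule cInf_lower) (use assms ccost_nonneg in \<open>auto intro!: bdd_belowI[where m=0]\<close>)

lemma tcost_nonneg:
  assumes "\<forall>x r y. cost x r y \<ge> 0"
  shows "tcost cost \<pi> r \<pi>' \<ge> 0"
  unfolding tcost_alt
proof (rule cInf_greatest)
  show "{ccost cost \<pi> r \<pi>' \<gamma> | \<gamma>. coupling \<gamma> \<pi> \<pi>'} \<noteq> {}" using coupling_pair by blast
  fix z assume "z \<in> {ccost cost \<pi> r \<pi>' \<gamma> | \<gamma>. coupling \<gamma> \<pi> \<pi>'}"
  then show "0 \<le> z" using ccost_nonneg[OF assms] by auto
qed



lemma ccost_alt: "ccost cost \<pi> r \<pi>' \<gamma> = (\<Sum>p\<in>set_pmf \<pi> \<times> set_pmf \<pi>'. pmf \<gamma> p * cost (fst p) r (snd p))"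
  unfolding ccost_def by (simp add: case_prod_beta)

lemma opt_coupling:
  fixes cost :: "'x \<Rightarrow> 'r \<Rightarrow> 'x \<Rightarrow> real"
  assumes nn: "\<forall>x r y. cost x r y \<ge> 0" and fin: "finite (set_pmf \<pi>)" "finite (set_pmf \<pi>')"
  shows "\<exists>\<gamma>. coupling \<gamma> \<pi> \<pi>' \<and> ccost cost \<pi> r \<pi>' \<gamma> = tcost cost \<pi> r \<pi>'"
proof -
  define t where "t = tcost cost \<pi> r \<pi>'"
  define C where "C = {ccost cost \<pi> r \<pi>' \<gamma> | \<gamma>. coupling \<gamma> \<pi> \<pi>'}"
  define S where "S = set_pmf \<pi>"
  define S' where "S' = set_pmf \<pi>'"
  define I where "I = S \<times> S'"
  have finI: "finite I" "finite S" "finite S'" using fin unfolding I_def S_def S'_def by auto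
  have tC: "t = Inf C" unfolding t_def C_def tcost_alt ..
  have Cne: "C \<noteq> {}" unfolding C_def using coupling_pair by blast
  have Cbdd: "bdd_below C" unfolding C_def using ccost_nonneg[OF nn] by (auto intro!: bdd_belowI[where m=0])
  have "\<forall>n::nat. \<exists>\<gamma>. coupling \<gamma> \<pi> \<pi>' \<and> ccost cost \<pi> r \<pi>' \<gamma> < t + inverse (real (Suc n))"
  proof
    fix n :: nat
    have "Inf C < t + inverse (real (Suc n))" using tC by simp
    then obtain z where "z \<in> C" "z < t + inverse (real (Suc n))" using cInf_less_iff[OF Cne Cbdd] by blast
    then show "\<exists>\<gamma>. coupling \<gamma> \<pi> \<pi>' \<and> ccost cost \<pi> r \<pi>' \<gamma> < t + inverse (real (Suc n))"
      unfolding C_def by blast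
  qed
  then obtain g where g: "\<And>n. coupling (g n) \<pi> \<pi>'" "\<And>n. ccost cost \<pi> r \<pi>' (g n) < t + inverse (real (Suc n))"
    by metis
  have low: "\<And>n. t \<le> ccost cost \<pi> r \<pi>' (g n)" unfolding t_def using tcost_le[OF nn g(1)] by blast
  have gsupp: "\<And>n. set_pmf (g n) \<subseteq> S \<times> S'" using coupling_support[OF g(1)] unfolding S_def S'_def by blast
  have "\<forall>\<delta>\<subseteq>I. \<exists>l::('x\<times>'x) \<Rightarrow> real. \<exists>r::nat\<Rightarrow>nat.
    strict_mono r \<and> (\<forall>\<epsilon>>0. eventually (\<lambda>n. \<forall>i\<in>\<delta>. dist (pmf (g (r n)) i) (l i) < \<epsilon>) sequentially)"
    by (rule compact_lemma_general[where f="\<lambda>n. pmf (g n)" and proj="\<lambda>h i. h i" and unproj="\<lambda>h. h"])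
       (auto simp: finI bounded_iff intro!: exI[where x=1] pmf_le_1)
  then obtain l :: "('x\<times>'x) \<Rightarrow> real" and rr :: "nat \<Rightarrow> nat" where rr: "strict_mono rr"
    and lconv: "\<forall>\<epsilon>>0. eventually (\<lambda>n. \<forall>i\<in>I. dist (pmf (g (rr n)) i) (l i) < \<epsilon>) sequentially"
    by blast
  define h where "h = (\<lambda>i. if i \<in> I then l i else 0)"
  have conv: "(\<lambda>n. pmf (g (rr n)) i) \<longlonglongrightarrow> h i" if "i \<in> I" for i
  proof (rule tendstoI)
    fix e :: real assume "e > 0"
    then show "eventually (\<lambda>n. dist (pmf (g (rr n)) i) (h i) < e) sequentially"
      using lconv that unfolding h_def by (auto elim!: eventually_mono)
  qed
  have hnn: "h i \<ge> 0" for i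
  proof (cases "i \<in> I")
    case True
    show ?thesis by (rule LIMSEQ_le_const[OF conv[OF True]]) (auto simp: pmf_nonneg)
  qed (simp add: h_def)
  have h0: "h i = 0" if "i \<notin> I" for i using that by (simp add: h_def)
  have marg1: "(\<Sum>y\<in>S'. h (x,y)) = pmf \<pi> x" if "x \<in> S" for x
  proof -
    have "(\<lambda>n. \<Sum>y\<in>S'. pmf (g (rr n)) (x,y)) \<longlonglongrightarrow> (\<Sum>y\<in>S'. h (x,y))"
      by (intro tendsto_sum conv) (use that in \<open>auto simp: I_def\<close>)
    moreover have "(\<Sum>y\<in>S'. pmf (g (rr n)) (x,y)) = pmf \<pi> x" for n
      using pmf_map_fst_sum[OF gsupp finI(3), of "rr n" x] g(1)[of "rr n"] unfolding coupling_def by simp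
    ultimately have "(\<lambda>n. pmf \<pi> x) \<longlonglongrightarrow> (\<Sum>y\<in>S'. h (x,y))" by simp
    then show ?thesis by (simp add: LIMSEQ_const_iff)
  qed
  have marg2: "(\<Sum>x\<in>S. h (x,y)) = pmf \<pi>' y" if "y \<in> S'" for y
  proof -
    have "(\<lambda>n. \<Sum>x\<in>S. pmf (g (rr n)) (x,y)) \<longlonglongrightarrow> (\<Sum>x\<in>S. h (x,y))"
      by (intro tendsto_sum conv) (use that in \<open>auto simp: I_def\<close>)
    moreover have "(\<Sum>x\<in>S. pmf (g (rr n)) (x,y)) = pmf \<pi>' y" for n
      using pmf_map_snd_sum[OF gsupp finI(2), of "rr n" y] g(1)[of "rr n"] unfolding coupling_def by simp
    ultimately have "(\<lambda>n. pmf \<pi>' y) \<longlonglongrightarrow> (\<Sum>x\<in>S. h (x,y))" by simp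
    then show ?thesis by (simp add: LIMSEQ_const_iff)
  qed
  have sum1: "sum h I = 1"
  proof -
    have "sum h I = (\<Sum>x\<in>S. \<Sum>y\<in>S'. h (x,y))" unfolding I_def by (simp add: sum.cartesian_product)
    also have "\<dots> = (\<Sum>x\<in>S. pmf \<pi> x)" by (intro sum.cong refl marg1)
    also have "\<dots> = 1" using finI by (intro sum_pmf_eq_1) (auto simp: S_def)
    finally show ?thesis .
  qed
  have nnint: "(\<integral>\<^sup>+x. ennreal (h x) \<partial>count_space UNIV) = 1"
  proof -
    have "(\<integral>\<^sup>+x. ennreal (h x) \<partial>count_space UNIV) = (\<Sum>x\<in>I. ennreal (h x))"
      by (rule nn_integral_count_space') (auto simp: finI h0)
    also have "\<dots> = ennreal (sum h I)" by (rule sum_ennreal) (rule hnn)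
    finally show ?thesis using sum1 by simp
  qed
  define \<gamma> where "\<gamma> = embed_pmf h"
  have pg: "pmf \<gamma> = h" unfolding \<gamma>_def using pmf_embed_pmf[of h, OF hnn nnint] by auto
  have sg: "set_pmf \<gamma> \<subseteq> S \<times> S'" using h0 unfolding set_pmf_eq pg I_def by auto
  have c1: "map_pmf fst \<gamma> = \<pi>"
  proof (rule pmf_eqI)
    fix x
    have "pmf (map_pmf fst \<gamma>) x = (\<Sum>y\<in>S'. h (x,y))" using pmf_map_fst_sum[OF sg finI(3)] pg by simp
    also have "\<dots> = pmf \<pi> x"
    proof (cases "x \<in> S")
      case False
      then have "pmf \<pi> x = 0" unfolding S_def by (simp add: pmf_eq_0_set_pmf)
      with False show ?thesis by (simp add: h0 I_def)
    qed (rule marg1)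
    finally show "pmf (map_pmf fst \<gamma>) x = pmf \<pi> x" .
  qed
  have c2: "map_pmf snd \<gamma> = \<pi>'"
  proof (rule pmf_eqI)
    fix y
    have "pmf (map_pmf snd \<gamma>) y = (\<Sum>x\<in>S. h (x,y))" using pmf_map_snd_sum[OF sg finI(2)] pg by simp
    also have "\<dots> = pmf \<pi>' y"
    proof (cases "y \<in> S'")
      case False
      then have "pmf \<pi>' y = 0" unfolding S'_def by (simp add: pmf_eq_0_set_pmf)
      with False show ?thesis by (simp add: h0 I_def)
    qed (rule marg2)
    finally show "pmf (map_pmf snd \<gamma>) y = pmf \<pi>' y" .
  qed
  have cg: "coupling \<gamma> \<pi> \<pi>'" using c1 c2 unfolding coupling_def by simp
  have lim1: "(\<lambda>n. ccost cost \<pi> r \<pi>' (g (rr n))) \<longlonglongrightarrow> ccost cost \<pi> r \<pi>' \<gamma>"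
    unfolding ccost_alt pg S_def[symmetric] S'_def[symmetric] I_def[symmetric]
    by (intro tendsto_sum tendsto_mult_right conv)
  have lim2: "(\<lambda>n. ccost cost \<pi> r \<pi>' (g (rr n))) \<longlonglongrightarrow> t"
  proof (rule tendsto_sandwich[where f="\<lambda>_. t" and h="\<lambda>n. t + inverse (real (Suc n))"])
    show "\<forall>\<^sub>F n in sequentially. t \<le> ccost cost \<pi> r \<pi>' (g (rr n))" using low by simp
    have "ccost cost \<pi> r \<pi>' (g (rr n)) \<le> t + inverse (real (Suc n))" for n
    proof -
      have "n \<le> rr n" using rr by (rule seq_suble)
      then have "inverse (real (Suc (rr n))) \<le> inverse (real (Suc n))"
        by (intro le_imp_inverse_le) auto
      then show ?thesis using g(2)[of "rr n"] by linarith
    qed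
    then show "\<forall>\<^sub>F n in sequentially. ccost cost \<pi> r \<pi>' (g (rr n)) \<le> t + inverse (real (Suc n))" by simp
    show "(\<lambda>n. t) \<longlonglongrightarrow> t" by simp
    show "(\<lambda>n. t + inverse (real (Suc n))) \<longlonglongrightarrow> t"
      using tendsto_add[OF tendsto_const LIMSEQ_inverse_real_of_nat, of t] by simp
  qed
  have "ccost cost \<pi> r \<pi>' \<gamma> = t" using LIMSEQ_unique[OF lim1 lim2] .
  then show ?thesis using cg unfolding t_def by blast
qed



fun pickL :: "('a \<Rightarrow> real) \<Rightarrow> real \<Rightarrow> 'a list \<Rightarrow> real \<Rightarrow> 'a \<times> real" where
  "pickL w c [] v = (undefined, 0)"
| "pickL w c (x # xs) v = (if v < c + w x then (x, (v - c) / w x) else pickL w (c + w x) xs v)"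

lemma pick_integral:
  fixes H :: "'a \<Rightarrow> real \<Rightarrow> real"
  assumes pos: "\<And>x. x \<in> set xs \<Longrightarrow> w x > 0"
    and int: "\<And>x. x \<in> set xs \<Longrightarrow> integrable lborel (\<lambda>u. indicator {0..<1} u * H x u)"
  shows "integrable lborel (\<lambda>v. indicator {c..<c + sum_list (map w xs)} v * H (fst (pickL w c xs v)) (snd (pickL w c xs v))) \<and>
    (\<integral>v. indicator {c..<c + sum_list (map w xs)} v * H (fst (pickL w c xs v)) (snd (pickL w c xs v)) \<partial>lborel) =
    (\<Sum>x\<leftarrow>xs. w x * (\<integral>u. indicator {0..<1} u * H x u \<partial>lborel))"
  using pos int
proof (induction xs arbitrary: c)
  case Nil
  then show ?case by simp
next
  case (Cons x xs)
  define a where "a = w x"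
  define S where "S = sum_list (map w xs)"
  have a: "a > 0" using Cons.prems a_def by auto
  have S: "S \<ge> 0" unfolding S_def using Cons.prems(1) by (intro sum_list_nonneg) (auto intro: less_imp_le)
  define f1 where "f1 = (\<lambda>v. indicator {c..<c+a} v * H x ((v - c) / a))"
  define f2 where "f2 = (\<lambda>v. indicator {c+a..<(c+a)+S} v * H (fst (pickL w (c+a) xs v)) (snd (pickL w (c+a) xs v)))"
  have IH: "integrable lborel f2 \<and> integral\<^sup>L lborel f2 = (\<Sum>x\<leftarrow>xs. w x * (\<integral>u. indicator {0..<1} u * H x u \<partial>lborel))"
    unfolding f2_def S_def using Cons.IH Cons.prems by auto
  have f1sub: "(\<lambda>u. f1 (c + a * u)) = (\<lambda>u. indicator {0..<1} u * H x u)"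
  proof
    fix u
    have i: "indicator {c..<c+a} (c + a * u) = (indicator {0..<1} u :: real)"
      using a by (auto simp: indicator_def mult_less_cancel_left1 zero_le_mult_iff)
    show "f1 (c + a * u) = indicator {0..<1} u * H x u"
      unfolding f1_def i using a by simp
  qed
  have int1: "integrable lborel f1"
    using lborel_integrable_real_affine_iff[of a f1 c] a f1sub Cons.prems(2)[of x] by simp
  have I1: "integral\<^sup>L lborel f1 = a * (\<integral>u. indicator {0..<1} u * H x u \<partial>lborel)"
    using lborel_integral_real_affine[of a f1 c] a f1sub by simp
  have split: "indicator {c..<c + sum_list (map w (x#xs))} v * H (fst (pickL w c (x#xs) v)) (snd (pickL w c (x#xs) v))
      = f1 v + f2 v" for v
  proof -
    have e: "c + sum_list (map w (x#xs)) = (c + a) + S" unfolding a_def S_def by simp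
    show ?thesis unfolding e f1_def f2_def using a S
      by (auto simp: indicator_def a_def[symmetric])
  qed
  show ?case
    unfolding split using int1 IH I1 a_def
    by (simp add: Bochner_Integration.integral_add)
qed

definition enum :: "'a pmf \<Rightarrow> 'a list" where
  "enum p = (SOME xs. set xs = set_pmf p \<and> distinct xs)"

lemma enum: "finite (set_pmf p) \<Longrightarrow> set (enum p) = set_pmf p \<and> distinct (enum p)"
  unfolding enum_def by (rule someI_ex) (rule finite_distinct_list)

lemma pmf_pick_integral:
  fixes H :: "'a \<Rightarrow> real \<Rightarrow> real"
  assumes fin: "finite (set_pmf p)"
    and int: "\<And>x. x \<in> set_pmf p \<Longrightarrow> integrable lborel (\<lambda>u. indicator {0..<1} u * H x u)"
  shows "integrable lborel (\<lambda>v. indicator {0..<1} v * H (fst (pickL (pmf p) 0 (enum p) v)) (snd (pickL (pmf p) 0 (enum p) v))) \<and>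
    (\<integral>v. indicator {0..<1} v * H (fst (pickL (pmf p) 0 (enum p) v)) (snd (pickL (pmf p) 0 (enum p) v)) \<partial>lborel) =
    measure_pmf.expectation p (\<lambda>x. \<integral>u. indicator {0..<1} u * H x u \<partial>lborel)"
proof -
  have e: "set (enum p) = set_pmf p" "distinct (enum p)" using enum[OF fin] by auto
  have s1: "sum_list (map (pmf p) (enum p)) = 1"
    using sum.distinct_set_conv_list[OF e(2), of "pmf p"] e(1) sum_pmf_eq_1[OF fin, of p] by simp
  have P: "integrable lborel (\<lambda>v. indicator {0..<0 + sum_list (map (pmf p) (enum p))} v * H (fst (pickL (pmf p) 0 (enum p) v)) (snd (pickL (pmf p) 0 (enum p) v))) \<and>
    (\<integral>v. indicator {0..<0 + sum_list (map (pmf p) (enum p))} v * H (fst (pickL (pmf p) 0 (enum p) v)) (snd (pickL (pmf p) 0 (enum p) v)) \<partial>lborel) =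
    (\<Sum>x\<leftarrow>enum p. pmf p x * (\<integral>u. indicator {0..<1} u * H x u \<partial>lborel))"
    by (rule pick_integral) (use e int pmf_positive in auto)
  have "(\<Sum>x\<leftarrow>enum p. pmf p x * (\<integral>u. indicator {0..<1} u * H x u \<partial>lborel)) =
      (\<Sum>x\<in>set_pmf p. pmf p x * (\<integral>u. indicator {0..<1} u * H x u \<partial>lborel))"
    using sum.distinct_set_conv_list[OF e(2)] e(1) by metis
  also have "\<dots> = measure_pmf.expectation p (\<lambda>x. \<integral>u. indicator {0..<1} u * H x u \<partial>lborel)"
    by (subst integral_measure_pmf_real[OF fin]) (auto simp: mult.commute)
  finally show ?thesis using P s1 by simp
qed

definition pk where "pk T s r v = pickL (pmf (T s r)) 0 (enum (T s r)) v"

fun Gs where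
  "Gs T s v [] = s"
| "Gs T s v (r # rs) = Gs T (fst (pk T s r v)) (snd (pk T s r v)) rs"

definition Adet where "Adet T s v = (\<lambda>\<sigma>. fst (Gs T s v \<sigma>))"

lemma det_cost_Nil[simp]: "det_cost cost A [] = 0"
  unfolding det_cost_def by simp

lemma det_cost_Cons: "det_cost cost A (r#rs) = cost (A []) r (A [r]) + det_cost cost (\<lambda>\<sigma>. A (r#\<sigma>)) rs"
  unfolding det_cost_def by (simp add: sum.lessThan_Suc_shift del: sum.lessThan_Suc)

lemma det_sim:
  fixes T :: "'x \<times> 'mm \<Rightarrow> 'r \<Rightarrow> ('x \<times> 'mm) pmf" and cost :: "'x \<Rightarrow> 'r \<Rightarrow> 'x \<Rightarrow> real"
  assumes fin: "\<And>s r. finite (set_pmf (T s r))"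
  shows "integrable lborel (\<lambda>v. indicator {0..<1} v * det_cost cost (Adet T s v) \<rho>) \<and>
    (\<integral>v. indicator {0..<1} v * det_cost cost (Adet T s v) \<rho> \<partial>lborel) =
    measure_pmf.expectation (chain T s \<rho>) (path_cost (\<lambda>s r s'. cost (fst s) r (fst s')) s \<rho>)"
proof (induction \<rho> arbitrary: s)
  case Nil
  then show ?case by simp
next
  case (Cons r rs)
  define H where "H = (\<lambda>s' u. cost (fst s) r (fst s') + det_cost cost (Adet T s' u) rs)"
  define V where "V = (\<lambda>s'. measure_pmf.expectation (chain T s' rs) (path_cost (\<lambda>s r s'. cost (fst s) r (fst s')) s' rs))"
  have dc: "det_cost cost (Adet T s v) (r#rs) = H (fst (pk T s r v)) (snd (pk T s r v))" for v
    unfolding H_def det_cost_Cons by (simp add: Adet_def)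
  have Hint: "integrable lborel (\<lambda>u. indicator {0..<1} u * H s' u) \<and>
      (\<integral>u. indicator {0..<1} u * H s' u \<partial>lborel) = cost (fst s) r (fst s') + V s'" for s'
  proof -
    have eq: "(\<lambda>u. indicator {0..<1} u * H s' u) = (\<lambda>u. cost (fst s) r (fst s') * indicator {0..<1} u + indicator {0..<1} u * det_cost cost (Adet T s' u) rs)"
      unfolding H_def by (simp add: fun_eq_iff algebra_simps)
    have i1: "integrable lborel (\<lambda>u::real. cost (fst s) r (fst s') * (indicator {0..<1} u :: real))"
      by (intro integrable_mult_right integrable_real_indicator) auto
    have m1: "{0..<1::real} \<in> sets borel" by measurable
    have m2: "emeasure lborel {0..<1::real} < \<top>" by simp
    show ?thesis unfolding eq using Cons.IH[of s'] i1 m1 m2 unfolding V_def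
      by (simp add: Bochner_Integration.integral_add)
  qed
  have "integrable lborel (\<lambda>v. indicator {0..<1} v * H (fst (pk T s r v)) (snd (pk T s r v))) \<and>
      (\<integral>v. indicator {0..<1} v * H (fst (pk T s r v)) (snd (pk T s r v)) \<partial>lborel) =
      measure_pmf.expectation (T s r) (\<lambda>x. \<integral>u. indicator {0..<1} u * H x u \<partial>lborel)"
    unfolding pk_def by (rule pmf_pick_integral[OF fin]) (use Hint in auto)
  moreover have "measure_pmf.expectation (T s r) (\<lambda>x. \<integral>u. indicator {0..<1} u * H x u \<partial>lborel) =
      measure_pmf.expectation (T s r) (\<lambda>x. cost (fst s) r (fst x) + V x)"
    using Hint by simp
  moreover have "measure_pmf.expectation (chain T s (r#rs)) (path_cost (\<lambda>s r s'. cost (fst s) r (fst s')) s (r#rs)) =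
      measure_pmf.expectation (T s r) (\<lambda>x. cost (fst s) r (fst x) + V x)"
    unfolding V_def by (rule chain_exp_Cons) (auto simp: fin chain_finite[where S=UNIV])
  ultimately show ?case unfolding dc by simp
qed



lemma det_measure:
  fixes T :: "'x \<times> 'mm \<Rightarrow> 'r \<Rightarrow> ('x \<times> 'mm) pmf" and cost :: "'x \<Rightarrow> 'r \<Rightarrow> 'x \<Rightarrow> real"
  assumes fin: "\<And>s r. finite (set_pmf (T s r))"
  shows "\<exists>M :: ('r list \<Rightarrow> 'x) measure. prob_space M \<and> (\<forall>A \<in> space M. det_alg (fst s) A) \<and>
     (\<forall>\<rho>. integrable M (\<lambda>A. det_cost cost A \<rho>) \<and>
        (\<integral>A. det_cost cost A \<rho> \<partial>M) = measure_pmf.expectation (chain T s \<rho>) (path_cost (\<lambda>s r s'. cost (fst s) r (fst s')) s \<rho>))"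
proof -
  define \<Omega> where "\<Omega> = restrict_space (lborel :: real measure) {0..<1}"
  define G where "G = Adet T s"
  define Dset where "Dset = {A :: 'r list \<Rightarrow> 'x. A [] = fst s}"
  define gen where "gen = {B. B \<subseteq> Dset \<and> G -` B \<inter> space \<Omega> \<in> sets \<Omega>}"
  define N where "N = measure_of Dset gen (\<lambda>_. 0)"
  define M where "M = distr \<Omega> N G"
  have genP: "gen \<subseteq> Pow Dset" unfolding gen_def by auto
  have GD: "G v \<in> Dset" for v unfolding G_def Dset_def Adet_def by simp
  have Gm: "G \<in> measurable \<Omega> N"
    unfolding N_def by (rule measurable_measure_of[OF genP]) (auto simp: GD gen_def)
  have sO: "{0..<1::real} \<inter> space lborel \<in> sets lborel" by simp
  have pO: "prob_space \<Omega>"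
  proof
    show "emeasure \<Omega> (space \<Omega>) = 1"
      unfolding \<Omega>_def space_restrict_space using sO
      by (subst emeasure_restrict_space) auto
  qed
  have pM: "prob_space M" unfolding M_def by (rule prob_space.prob_space_distr[OF pO Gm])
  have spM: "space M = Dset" unfolding M_def N_def by (simp add: space_measure_of_conv)
  have part: "integrable M (\<lambda>A. det_cost cost A \<rho>) \<and>
        (\<integral>A. det_cost cost A \<rho> \<partial>M) = measure_pmf.expectation (chain T s \<rho>) (path_cost (\<lambda>s r s'. cost (fst s) r (fst s')) s \<rho>)" for \<rho>
  proof -
    define f where "f = (\<lambda>A. det_cost cost A \<rho>)"
    have ds: "integrable lborel (\<lambda>v. indicator {0..<1} v * f (G v)) \<and>
      (\<integral>v. indicator {0..<1} v * f (G v) \<partial>lborel) =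
      measure_pmf.expectation (chain T s \<rho>) (path_cost (\<lambda>s r s'. cost (fst s) r (fst s')) s \<rho>)"
      unfolding f_def G_def by (rule det_sim[OF fin])
    have iO: "integrable \<Omega> (\<lambda>v. f (G v))"
      unfolding \<Omega>_def using ds by (subst integrable_restrict_space[OF sO]) simp
    have IO: "integral\<^sup>L \<Omega> (\<lambda>v. f (G v)) = measure_pmf.expectation (chain T s \<rho>) (path_cost (\<lambda>s r s'. cost (fst s) r (fst s')) s \<rho>)"
      unfolding \<Omega>_def using ds by (subst integral_restrict_space[OF sO]) simp
    have hm: "(\<lambda>v. f (G v)) \<in> borel_measurable \<Omega>" using iO by (rule borel_measurable_integrable)
    have fm: "f \<in> borel_measurable N"
    proof (rule measurableI)
      fix B :: "real set" assume B: "B \<in> sets borel"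
      have "f -` B \<inter> space N \<in> gen"
      proof -
        have "G -` (f -` B \<inter> space N) \<inter> space \<Omega> = (\<lambda>v. f (G v)) -` B \<inter> space \<Omega>"
          using GD unfolding N_def by (auto simp: space_measure_of_conv)
        moreover have "(\<lambda>v. f (G v)) -` B \<inter> space \<Omega> \<in> sets \<Omega>" using measurable_sets[OF hm B] .
        ultimately show ?thesis unfolding gen_def N_def by (auto simp: space_measure_of_conv)
      qed
      then show "f -` B \<inter> space N \<in> sets N"
        unfolding N_def sets_measure_of[OF genP] by (auto simp: space_measure_of_conv)
    qed simp
    have "integrable M f" unfolding M_def using integrable_distr_eq[OF Gm fm] iO by simp
    moreover have "integral\<^sup>L M f = integral\<^sup>L \<Omega> (\<lambda>v. f (G v))" unfolding M_def by (rule integral_distr[OF Gm fm])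
    ultimately show ?thesis using IO unfolding f_def by simp
  qed
  show ?thesis
    using pM spM part unfolding Dset_def det_alg_def by (intro exI[of _ M]) auto
qed



definition piD :: "('x pmf \<times> 'm) pmf \<Rightarrow> 'x pmf" where
  "piD \<mu> = bind_pmf \<mu> fst"

definition nxtD :: "('x pmf \<times> 'm \<Rightarrow> 'r \<Rightarrow> ('x pmf \<times> 'm) pmf) \<Rightarrow> ('x pmf \<times> 'm) pmf \<Rightarrow> 'r \<Rightarrow> ('x pmf \<times> 'm) pmf" where
  "nxtD step \<mu> r = bind_pmf \<mu> (\<lambda>k. step k r)"

definition Fd :: "'x \<Rightarrow> ('x pmf \<times> 'm \<Rightarrow> 'r \<Rightarrow> ('x pmf \<times> 'm) pmf) \<Rightarrow> 'x pmf \<times> ('x pmf \<times> 'm) pmf \<Rightarrow> 'r \<Rightarrow> 'x pmf \<times> ('x pmf \<times> 'm) pmf" where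
  "Fd s0 step = (\<lambda>(\<pi>, \<mu>) r. (if finite (set_pmf (piD (nxtD step \<mu> r))) then piD (nxtD step \<mu> r) else return_pmf s0, nxtD step \<mu> r))"

definition gam where
  "gam cost step \<mu> r = (SOME \<gamma>. coupling \<gamma> (piD \<mu>) (piD (nxtD step \<mu> r)) \<and>
      ccost cost (piD \<mu>) r (piD (nxtD step \<mu> r)) \<gamma> = tcost cost (piD \<mu>) r (piD (nxtD step \<mu> r)))"

definition T0 where
  "T0 cost step = (\<lambda>(x, \<mu>) r. map_pmf (\<lambda>y. (y, nxtD step \<mu> r)) (map_pmf snd (cond_pmf (gam cost step \<mu> r) {p. fst p = x})))"

definition Tb where
  "Tb cost step = (\<lambda>s r. if finite (set_pmf (T0 cost step s r)) then T0 cost step s r else return_pmf s)"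

lemma Tb_finite: "finite (set_pmf (Tb cost step s r))"
  unfolding Tb_def by auto

lemma path_cost_Nil[simp]: "path_cost c s [] ss = 0"
  by (cases ss) auto

lemma exp_cond_decomp:
  fixes f :: "'a \<Rightarrow> 'b \<Rightarrow> real"
  assumes fin: "finite (set_pmf \<gamma>)"
  shows "measure_pmf.expectation \<gamma> (\<lambda>p. f (fst p) (snd p)) =
    measure_pmf.expectation (map_pmf fst \<gamma>) (\<lambda>x. measure_pmf.expectation (map_pmf snd (cond_pmf \<gamma> {p. fst p = x})) (f x))"
proof -
  have ne: "set_pmf \<gamma> \<inter> {p. fst p = x} \<noteq> {}" if "x \<in> set_pmf (map_pmf fst \<gamma>)" for x
    using that by auto
  have eq: "bind_pmf (map_pmf fst \<gamma>) (\<lambda>x. cond_pmf \<gamma> {p. fst p = x}) = \<gamma>"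
    by (rule bind_cond_pmf_cancel) (auto simp: vimage_def)
  have "measure_pmf.expectation \<gamma> (\<lambda>p. f (fst p) (snd p)) =
      measure_pmf.expectation (map_pmf fst \<gamma>) (\<lambda>x. measure_pmf.expectation (cond_pmf \<gamma> {p. fst p = x}) (\<lambda>p. f (fst p) (snd p)))"
    by (subst eq[symmetric], rule exp_bind) (use fin ne in auto)
  also have "\<dots> = measure_pmf.expectation (map_pmf fst \<gamma>) (\<lambda>x. measure_pmf.expectation (map_pmf snd (cond_pmf \<gamma> {p. fst p = x})) (f x))"
  proof (rule exp_cong)
    fix x assume x: "x \<in> set_pmf (map_pmf fst \<gamma>)"
    have "measure_pmf.expectation (cond_pmf \<gamma> {p. fst p = x}) (\<lambda>p. f (fst p) (snd p)) =
        measure_pmf.expectation (cond_pmf \<gamma> {p. fst p = x}) (\<lambda>p. f x (snd p))"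
      by (rule exp_cong) (use set_cond_pmf[OF ne[OF x]] in auto)
    then show "measure_pmf.expectation (cond_pmf \<gamma> {p. fst p = x}) (\<lambda>p. f (fst p) (snd p)) =
        measure_pmf.expectation (map_pmf snd (cond_pmf \<gamma> {p. fst p = x})) (f x)" by simp
  qed
  finally show ?thesis .
qed

context
  fixes cost :: "'x \<Rightarrow> 'r \<Rightarrow> 'x \<Rightarrow> real" and s0 :: 'x
    and m0 :: 'm and step :: "'x pmf \<times> 'm \<Rightarrow> 'r \<Rightarrow> ('x pmf \<times> 'm) pmf"
  assumes cnn: "\<forall>x r y. cost x r y \<ge> 0" and malg: "mixed_alg s0 m0 step"
begin

abbreviation "RR \<equiv> reachable step (return_pmf s0, m0)"

lemma R_step_fin: "k \<in> RR \<Longrightarrow> finite (set_pmf (step k r))"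
  using malg unfolding mixed_alg_def by blast

lemma R_closed: "k \<in> RR \<Longrightarrow> k' \<in> set_pmf (step k r) \<Longrightarrow> k' \<in> RR"
  by (rule reachable.step_rule)

lemma R_fst_fin: "k \<in> RR \<Longrightarrow> finite (set_pmf (fst k))"
proof (induction rule: reachable.induct)
  case start_rule then show ?case by simp
next
  case (step_rule k k' r) then show ?case using malg unfolding mixed_alg_def by blast
qed

definition Good :: "('x pmf \<times> 'm) pmf \<Rightarrow> bool" where
  "Good \<mu> \<longleftrightarrow> finite (set_pmf \<mu>) \<and> set_pmf \<mu> \<subseteq> RR"

lemma Good_piD: "Good \<mu> \<Longrightarrow> finite (set_pmf (piD \<mu>))"
  unfolding Good_def piD_def using R_fst_fin by auto

lemma Good_nxtD: "Good \<mu> \<Longrightarrow> Good (nxtD step \<mu> r)"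
  unfolding Good_def nxtD_def using R_step_fin R_closed by auto

lemma Good_return: "Good (return_pmf (return_pmf s0, m0))"
  unfolding Good_def by (auto intro: reachable.start_rule)

definition Vm where
  "Vm k \<rho> = measure_pmf.expectation (chain step k \<rho>)
       (path_cost (\<lambda>k r k'. mixed_step_cost cost step k r) k \<rho>)"

lemma chain_fin_R: "k \<in> RR \<Longrightarrow> finite (set_pmf (chain step k \<rho>))"
  by (rule chain_finite[where S=RR]) (auto intro: R_step_fin R_closed)

lemma Vm_Nil: "Vm k [] = 0"
  unfolding Vm_def by simp

lemma Vm_Cons: "k \<in> RR \<Longrightarrow> Vm k (r#rs) = mixed_step_cost cost step k r + measure_pmf.expectation (step k r) (\<lambda>k'. Vm k' rs)"
  unfolding Vm_def
  by (subst chain_exp_Cons) (auto simp: R_step_fin chain_fin_R R_closed exp_add_const)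

lemma piD_nxtD_fin: "k \<in> RR \<Longrightarrow> finite (set_pmf (piD (step k r)))"
  unfolding piD_def using R_step_fin R_closed R_fst_fin by auto

lemma convexity:
  assumes G: "Good \<mu>"
  shows "tcost cost (piD \<mu>) r (piD (nxtD step \<mu> r)) \<le>
         measure_pmf.expectation \<mu> (\<lambda>k. mixed_step_cost cost step k r)"
proof -
  define gk where "gk = (\<lambda>k. SOME \<gamma>. coupling \<gamma> (fst k) (piD (step k r)) \<and>
       ccost cost (fst k) r (piD (step k r)) \<gamma> = tcost cost (fst k) r (piD (step k r)))"
  have gk: "coupling (gk k) (fst k) (piD (step k r)) \<and>
       ccost cost (fst k) r (piD (step k r)) (gk k) = tcost cost (fst k) r (piD (step k r))"
    if "k \<in> set_pmf \<mu>" for k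
  proof -
    have kR: "k \<in> RR" using G that unfolding Good_def by auto
    show ?thesis unfolding gk_def
      by (rule someI_ex, rule opt_coupling[OF cnn]) (use kR R_fst_fin piD_nxtD_fin in auto)
  qed
  have finmu: "finite (set_pmf \<mu>)" using G unfolding Good_def by auto
  have gkfin: "finite (set_pmf (gk k))" if "k \<in> set_pmf \<mu>" for k
  proof -
    have kR: "k \<in> RR" using G that unfolding Good_def by auto
    show ?thesis using coupling_support[of "gk k"] gk[OF that] R_fst_fin[OF kR] piD_nxtD_fin[OF kR]
      by (meson finite_SigmaI finite_subset)
  qed
  define \<Gamma> where "\<Gamma> = bind_pmf \<mu> gk"
  have m1: "map_pmf fst \<Gamma> = piD \<mu>"
    unfolding \<Gamma>_def piD_def map_bind_pmf
    by (intro bind_pmf_cong refl) (use gk in \<open>auto simp: coupling_def\<close>)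
  have m2: "map_pmf snd \<Gamma> = piD (nxtD step \<mu> r)"
    unfolding \<Gamma>_def map_bind_pmf nxtD_def piD_def bind_assoc_pmf
    by (intro bind_pmf_cong refl) (use gk in \<open>auto simp: coupling_def piD_def\<close>)
  have cG: "coupling \<Gamma> (piD \<mu>) (piD (nxtD step \<mu> r))" using m1 m2 unfolding coupling_def by simp
  have "tcost cost (piD \<mu>) r (piD (nxtD step \<mu> r)) \<le> ccost cost (piD \<mu>) r (piD (nxtD step \<mu> r)) \<Gamma>"
    by (rule tcost_le[OF cnn cG])
  also have "\<dots> = measure_pmf.expectation \<Gamma> (\<lambda>(x,y). cost x r y)"
    by (rule ccost_integral[OF cG]) (use G Good_piD Good_nxtD in auto)
  also have "\<dots> = measure_pmf.expectation \<mu> (\<lambda>k. measure_pmf.expectation (gk k) (\<lambda>(x,y). cost x r y))"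
    unfolding \<Gamma>_def by (rule exp_bind[OF finmu gkfin])
  also have "\<dots> = measure_pmf.expectation \<mu> (\<lambda>k. mixed_step_cost cost step k r)"
  proof (rule exp_cong)
    fix k assume k: "k \<in> set_pmf \<mu>"
    have kR: "k \<in> RR" using G k unfolding Good_def by auto
    have "measure_pmf.expectation (gk k) (\<lambda>(x,y). cost x r y) = ccost cost (fst k) r (piD (step k r)) (gk k)"
      by (rule ccost_integral[symmetric]) (use gk[OF k] R_fst_fin[OF kR] piD_nxtD_fin[OF kR] in auto)
    also have "\<dots> = mixed_step_cost cost step k r"
      using gk[OF k] unfolding mixed_step_cost_def piD_def by simp
    finally show "measure_pmf.expectation (gk k) (\<lambda>(x,y). cost x r y) = mixed_step_cost cost step k r" .
  qed
  finally show ?thesis .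
qed

definition DD where
  "DD \<mu> \<rho> = path_cost (\<lambda>k r k'. tcost cost (fst k) r (fst k')) (piD \<mu>, \<mu>) \<rho> (drun (Fd s0 step) (piD \<mu>, \<mu>) \<rho>)"

lemma DD_Cons: "Good \<mu> \<Longrightarrow> DD \<mu> (r#rs) = tcost cost (piD \<mu>) r (piD (nxtD step \<mu> r)) + DD (nxtD step \<mu> r) rs"
  unfolding DD_def using Good_piD[OF Good_nxtD] by (simp add: Fd_def)

lemma DD_le: "Good \<mu> \<Longrightarrow> DD \<mu> \<rho> \<le> measure_pmf.expectation \<mu> (\<lambda>k. Vm k \<rho>)"
proof (induction \<rho> arbitrary: \<mu>)
  case Nil
  then show ?case by (simp add: DD_def Vm_Nil)
next
  case (Cons r rs)
  have finmu: "finite (set_pmf \<mu>)" using Cons.prems unfolding Good_def by auto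
  have sR: "\<And>k. k \<in> set_pmf \<mu> \<Longrightarrow> k \<in> RR" using Cons.prems unfolding Good_def by auto
  have "DD \<mu> (r#rs) = tcost cost (piD \<mu>) r (piD (nxtD step \<mu> r)) + DD (nxtD step \<mu> r) rs"
    by (rule DD_Cons[OF Cons.prems])
  also have "\<dots> \<le> measure_pmf.expectation \<mu> (\<lambda>k. mixed_step_cost cost step k r) +
      measure_pmf.expectation (nxtD step \<mu> r) (\<lambda>k. Vm k rs)"
    by (intro add_mono convexity Cons.prems Cons.IH Good_nxtD)
  also have "measure_pmf.expectation (nxtD step \<mu> r) (\<lambda>k. Vm k rs) =
      measure_pmf.expectation \<mu> (\<lambda>k. measure_pmf.expectation (step k r) (\<lambda>k'. Vm k' rs))"
    unfolding nxtD_def by (rule exp_bind[OF finmu]) (use R_step_fin sR in auto)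
  also have "measure_pmf.expectation \<mu> (\<lambda>k. mixed_step_cost cost step k r) +
      measure_pmf.expectation \<mu> (\<lambda>k. measure_pmf.expectation (step k r) (\<lambda>k'. Vm k' rs)) =
      measure_pmf.expectation \<mu> (\<lambda>k. mixed_step_cost cost step k r + measure_pmf.expectation (step k r) (\<lambda>k'. Vm k' rs))"
    by (rule Bochner_Integration.integral_add[symmetric]) (auto intro: integrable_measure_pmf_finite finmu)
  also have "\<dots> = measure_pmf.expectation \<mu> (\<lambda>k. Vm k (r#rs))"
    by (rule exp_cong) (simp add: Vm_Cons sR)
  finally show ?case .
qed

lemma gam_prop: "Good \<mu> \<Longrightarrow> coupling (gam cost step \<mu> r) (piD \<mu>) (piD (nxtD step \<mu> r)) \<and>
    ccost cost (piD \<mu>) r (piD (nxtD step \<mu> r)) (gam cost step \<mu> r) = tcost cost (piD \<mu>) r (piD (nxtD step \<mu> r))"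
  unfolding gam_def by (rule someI_ex, rule opt_coupling[OF cnn]) (use Good_piD Good_nxtD in auto)

lemma gam_fin: "Good \<mu> \<Longrightarrow> finite (set_pmf (gam cost step \<mu> r))"
  using coupling_support[of "gam cost step \<mu> r"] gam_prop[of \<mu> r] Good_piD Good_nxtD
  by (meson finite_SigmaI finite_subset)

lemma T_eq:
  assumes G: "Good \<mu>" and x: "x \<in> set_pmf (piD \<mu>)"
  shows "Tb cost step (x, \<mu>) r = T0 cost step (x, \<mu>) r"
proof -
  let ?g = "gam cost step \<mu> r"
  have "x \<in> set_pmf (map_pmf fst ?g)" using gam_prop[OF G, of r] x unfolding coupling_def by simp
  then have ne: "set_pmf ?g \<inter> {p. fst p = x} \<noteq> {}" by auto
  have "finite (set_pmf (T0 cost step (x, \<mu>) r))"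
    unfolding T0_def using set_cond_pmf[OF ne] gam_fin[OF G, of r] by auto
  then show ?thesis unfolding Tb_def by simp
qed

definition Vb where
  "Vb s \<rho> = measure_pmf.expectation (chain (Tb cost step) s \<rho>)
       (path_cost (\<lambda>s r s'. cost (fst s) r (fst s')) s \<rho>)"

lemma Vb_Cons: "Vb s (r#rs) = measure_pmf.expectation (Tb cost step s r) (\<lambda>s'. cost (fst s) r (fst s') + Vb s' rs)"
  unfolding Vb_def
  by (subst chain_exp_Cons) (auto simp: Tb_finite chain_finite[where S=UNIV])

lemma Vb_DD: "Good \<mu> \<Longrightarrow> measure_pmf.expectation (piD \<mu>) (\<lambda>x. Vb (x, \<mu>) \<rho>) = DD \<mu> \<rho>"
proof (induction \<rho> arbitrary: \<mu>)
  case Nil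
  then show ?case by (simp add: DD_def Vb_def)
next
  case (Cons r rs)
  let ?g = "gam cost step \<mu> r"
  let ?\<mu> = "nxtD step \<mu> r"
  have G: "Good \<mu>" by fact
  have gp: "coupling ?g (piD \<mu>) (piD ?\<mu>)" "ccost cost (piD \<mu>) r (piD ?\<mu>) ?g = tcost cost (piD \<mu>) r (piD ?\<mu>)"
    using gam_prop[OF G, of r] by auto
  have gf: "finite (set_pmf ?g)" by (rule gam_fin[OF G])
  have "measure_pmf.expectation (piD \<mu>) (\<lambda>x. Vb (x, \<mu>) (r#rs)) =
      measure_pmf.expectation (piD \<mu>) (\<lambda>x. measure_pmf.expectation (map_pmf snd (cond_pmf ?g {p. fst p = x}))
         (\<lambda>y. cost x r y + Vb (y, ?\<mu>) rs))"
    by (rule exp_cong) (simp add: Vb_Cons T_eq[OF G] T0_def)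
  also have "\<dots> = measure_pmf.expectation ?g (\<lambda>p. cost (fst p) r (snd p) + Vb (snd p, ?\<mu>) rs)"
    using exp_cond_decomp[OF gf, of "\<lambda>x y. cost x r y + Vb (y, ?\<mu>) rs"] gp(1) unfolding coupling_def by simp
  also have "\<dots> = measure_pmf.expectation ?g (\<lambda>p. cost (fst p) r (snd p)) + measure_pmf.expectation ?g (\<lambda>p. Vb (snd p, ?\<mu>) rs)"
    by (rule Bochner_Integration.integral_add) (auto intro: integrable_measure_pmf_finite gf)
  also have "measure_pmf.expectation ?g (\<lambda>p. cost (fst p) r (snd p)) = tcost cost (piD \<mu>) r (piD ?\<mu>)"
  proof -
    have eqf: "(\<lambda>p. cost (fst p) r (snd p)) = (\<lambda>(x,y). cost x r y)" by (simp add: fun_eq_iff)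
    have A: "ccost cost (piD \<mu>) r (piD ?\<mu>) ?g = measure_pmf.expectation ?g (\<lambda>(x,y). cost x r y)"
      by (rule ccost_integral[OF gp(1) Good_piD[OF G] Good_piD[OF Good_nxtD[OF G]]])
    show ?thesis unfolding eqf by (rule trans[OF sym[OF A] gp(2)])
  qed
  also have "measure_pmf.expectation ?g (\<lambda>p. Vb (snd p, ?\<mu>) rs) = measure_pmf.expectation (piD ?\<mu>) (\<lambda>y. Vb (y, ?\<mu>) rs)"
  proof -
    have "piD ?\<mu> = map_pmf snd ?g" using gp(1) unfolding coupling_def by simp
    then show ?thesis by simp
  qed
  also have "\<dots> = DD ?\<mu> rs" by (rule Cons.IH[OF Good_nxtD[OF G]])
  finally show ?case using DD_Cons[OF G] by simp
qed


lemma main_ctx: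
  shows "(\<exists>M :: ('r list \<Rightarrow> 'x) measure.
            prob_space M \<and> (\<forall>A \<in> space M. det_alg s0 A) \<and>
            (\<forall>\<rho>. integrable M (\<lambda>A. det_cost cost A \<rho>) \<and>
                 (\<integral>A. det_cost cost A \<rho> \<partial>M) \<le> mixed_exp_cost cost s0 m0 step \<rho>))
       \<and> (\<exists>(mb0 :: ('x pmf \<times> 'm) pmf) T. behavioral_alg T \<and>
            (\<forall>\<rho>. beh_exp_cost cost s0 mb0 T \<rho> \<le> mixed_exp_cost cost s0 m0 step \<rho>))
       \<and> (\<exists>(md0 :: ('x pmf \<times> 'm) pmf) F. distributional_alg F \<and>
            (\<forall>\<rho>. dist_cost cost s0 md0 F \<rho> \<le> mixed_exp_cost cost s0 m0 step \<rho>))"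
proof -
  define \<mu>0 where "\<mu>0 = return_pmf (return_pmf s0, m0)"
  have G0: "Good \<mu>0" unfolding \<mu>0_def by (rule Good_return)
  have p0: "piD \<mu>0 = return_pmf s0" unfolding \<mu>0_def piD_def by (simp add: bind_return_pmf)
  have mix: "mixed_exp_cost cost s0 m0 step \<rho> = measure_pmf.expectation \<mu>0 (\<lambda>k. Vm k \<rho>)" for \<rho>
    unfolding \<mu>0_def mixed_exp_cost_def Vm_def by simp
  have d3: "dist_cost cost s0 \<mu>0 (Fd s0 step) \<rho> = DD \<mu>0 \<rho>" for \<rho>
    unfolding dist_cost_def DD_def p0 ..
  have DDle: "DD \<mu>0 \<rho> \<le> mixed_exp_cost cost s0 m0 step \<rho>" for \<rho>
    unfolding mix by (rule DD_le[OF G0])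
  have b2: "beh_exp_cost cost s0 \<mu>0 (Tb cost step) \<rho> = DD \<mu>0 \<rho>" for \<rho>
  proof -
    have "beh_exp_cost cost s0 \<mu>0 (Tb cost step) \<rho> = Vb (s0, \<mu>0) \<rho>"
      unfolding beh_exp_cost_def Vb_def ..
    also have "\<dots> = measure_pmf.expectation (piD \<mu>0) (\<lambda>x. Vb (x, \<mu>0) \<rho>)" unfolding p0 by simp
    also have "\<dots> = DD \<mu>0 \<rho>" by (rule Vb_DD[OF G0])
    finally show ?thesis .
  qed
  have dalg: "distributional_alg (Fd s0 step)"
    unfolding distributional_alg_def Fd_def by auto
  have balg: "behavioral_alg (Tb cost step)"
    unfolding behavioral_alg_def by (simp add: Tb_finite)
  obtain M :: "('r list \<Rightarrow> 'x) measure" where M: "prob_space M" "\<forall>A \<in> space M. det_alg (fst (s0, \<mu>0)) A"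
    "\<forall>\<rho>. integrable M (\<lambda>A. det_cost cost A \<rho>) \<and>
        (\<integral>A. det_cost cost A \<rho> \<partial>M) = measure_pmf.expectation (chain (Tb cost step) (s0, \<mu>0) \<rho>)
           (path_cost (\<lambda>s r s'. cost (fst s) r (fst s')) (s0, \<mu>0) \<rho>)"
    using det_measure[of "Tb cost step" "(s0, \<mu>0)" cost, OF Tb_finite] by (elim exE conjE) blast
  have M3: "\<forall>\<rho>. integrable M (\<lambda>A. det_cost cost A \<rho>) \<and>
        (\<integral>A. det_cost cost A \<rho> \<partial>M) \<le> mixed_exp_cost cost s0 m0 step \<rho>"
  proof
    fix \<rho>
    have "(\<integral>A. det_cost cost A \<rho> \<partial>M) = beh_exp_cost cost s0 \<mu>0 (Tb cost step) \<rho>"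
      using M(3) unfolding beh_exp_cost_def by simp
    then show "integrable M (\<lambda>A. det_cost cost A \<rho>) \<and>
        (\<integral>A. det_cost cost A \<rho> \<partial>M) \<le> mixed_exp_cost cost s0 m0 step \<rho>"
      using M(3) b2 DDle by simp
  qed
  show ?thesis
  proof (intro conjI)
    show "\<exists>M :: ('r list \<Rightarrow> 'x) measure.
            prob_space M \<and> (\<forall>A \<in> space M. det_alg s0 A) \<and>
            (\<forall>\<rho>. integrable M (\<lambda>A. det_cost cost A \<rho>) \<and>
                 (\<integral>A. det_cost cost A \<rho> \<partial>M) \<le> mixed_exp_cost cost s0 m0 step \<rho>)"
      using M(1,2) M3 by (intro exI[of _ M]) simp
    show "\<exists>(mb0 :: ('x pmf \<times> 'm) pmf) T. behavioral_alg T \<and>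
            (\<forall>\<rho>. beh_exp_cost cost s0 mb0 T \<rho> \<le> mixed_exp_cost cost s0 m0 step \<rho>)"
      using balg b2 DDle by (intro exI[of _ \<mu>0] exI[of _ "Tb cost step"]) simp
    show "\<exists>(md0 :: ('x pmf \<times> 'm) pmf) F. distributional_alg F \<and>
            (\<forall>\<rho>. dist_cost cost s0 md0 F \<rho> \<le> mixed_exp_cost cost s0 m0 step \<rho>)"
      using dalg d3 DDle by (intro exI[of _ \<mu>0] exI[of _ "Fd s0 step"]) simp
  qed
qed

end


theorem mainTheorem2:
  fixes d :: "'x \<Rightarrow> 'x \<Rightarrow> real" and cost :: "'x \<Rightarrow> 'r \<Rightarrow> 'x \<Rightarrow> real" and s0 :: 'x
    and m0 :: 'm and step :: "'x pmf \<times> 'm \<Rightarrow> 'r \<Rightarrow> ('x pmf \<times> 'm) pmf"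
  assumes "online_problem d cost" and "mixed_alg s0 m0 step"
  shows "(\<exists>M :: ('r list \<Rightarrow> 'x) measure.
            prob_space M \<and> (\<forall>A \<in> space M. det_alg s0 A) \<and>
            (\<forall>\<rho>. integrable M (\<lambda>A. det_cost cost A \<rho>) \<and>
                 (\<integral>A. det_cost cost A \<rho> \<partial>M) \<le> mixed_exp_cost cost s0 m0 step \<rho>))
       \<and> (\<exists>(mb0 :: ('x pmf \<times> 'm) pmf) T. behavioral_alg T \<and>
            (\<forall>\<rho>. beh_exp_cost cost s0 mb0 T \<rho> \<le> mixed_exp_cost cost s0 m0 step \<rho>))
       \<and> (\<exists>(md0 :: ('x pmf \<times> 'm) pmf) F. distributional_alg F \<and>
            (\<forall>\<rho>. dist_cost cost s0 md0 F \<rho> \<le> mixed_exp_cost cost s0 m0 step \<rho>))"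
proof -
  have cnn: "\<forall>x r y. cost x r y \<ge> 0" using assms(1) unfolding online_problem_def by blast
  show ?thesis by (rule main_ctx[OF cnn assms(2)])
qed

end
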